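(* Let $\alpha,\alpha',\beta,\beta',\tau,\kappa>0$ be real numbers satisfying $$\kappa\log\Big(\frac{1}{\tau}-1\Big)>\log 2+1,\qquad 0<\tau<\tfrac13,\qquad 0<\kappa<1,$$ $$\frac{1}{\alpha}+\frac{1}{\alpha'}<1,\qquad \gamma:=1-\frac{1}{\beta}-\frac{1}{\beta'}>0.$$ Then for every integer $M>0$, every real $C>0$, every channel $W$ with input alphabet $\mathcal X$ and output alphabet $\mathcal Y$, and every probability distribution $p$ on $\mathcal X$ such that $$\beta\,\mathrm{E}_{p}\,W_x\Big\{y : \tfrac{W_x(y)}{W_p(y)}\le C\Big\}+\alpha'\beta'\frac{1}{C}\Big\lceil\frac{M}{\gamma}\Big\rceil<1,$$ there exists an identification code $\Phi$ for $W$ with $$\mu(\Phi)\le \alpha\beta\,\mathrm{E}_{p}\,W_x\Big\{y: \tfrac{W_x(y)}{W_p(y)}\le C\Big\},\qquad \lambda(\Phi)\le \kappa+\alpha'\beta'\frac{1}{C}\Big\lceil\frac{M}{\gamma}\Big\rceil,\qquad |\Phi|=\Big\lfloor\frac{e^{\tau M}}{Me}\Big\rfloor.$$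
   Context: A channel $W$ from a finite or countable set $\mathcal X$ to a finite or countable set $\mathcal Y$ is a map $x\mapsto W_x$ assigning to each $x\in\mathcal X$ a probability distribution $W_x$ on $\mathcal Y$. For a distribution $p$ on $\mathcal X$, $W_p(y):=\sum_x p(x)W_x(y)$, and $\frac{W_x}{W_p}(y):=W_x(y)/W_p(y)$. $\mathrm{E}_p$ denotes expectation over $x$ distributed according to $p$; for a set $A\subset\mathcal Y$, $W_x\{A\}=W_x(A)=\sum_{y\in A}W_x(y)$. An identification code for $W$ is a triple $\Phi=(N,\{Q_1,\dots,Q_N\},\{\mathcal D_1,\dots,\mathcal D_N\})$ where $N$ is a positive integer, $Q_1,\dots,Q_N$ are probability distributions on $\mathcal X$, and $\mathcal D_1,\dots,\mathcal D_N\subset\mathcal Y$ are subsets (not necessarily disjoint). Its size is $|\Phi|:=N$, and its error probabilities are $\mu(\Phi):=\max_i W_{Q_i}(\mathcal D_i^c)$ and $\lambda(\Phi):=\max_{i\ne j}W_{Q_j}(\mathcal D_i)$, where $\mathcal D_i^c$ is the complement of $\mathcal D_i$ in $\mathcal Y$. *)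

theory Defs
  imports "HOL-Probability.Probability"
begin

text \<open>A channel from a countable type 'x to a countable type 'y is a map
  W :: 'x \<Rightarrow> 'y pmf.  For an input distribution p, W_p is the output distribution.\<close>

definition out_dist :: "('x \<Rightarrow> 'y pmf) \<Rightarrow> 'x pmf \<Rightarrow> 'y pmf" where
  "out_dist W p = bind_pmf p W"

definition info_tail :: "('x \<Rightarrow> 'y pmf) \<Rightarrow> 'x pmf \<Rightarrow> real \<Rightarrow> real" where
  "info_tail W p C = measure_pmf.expectation p
     (\<lambda>x. measure_pmf.prob (W x) {y. pmf (W x) y / pmf (out_dist W p) y \<le> C})"

text \<open>An identification code (N, Q_1..Q_N, D_1..D_N), indices 1..N.
  Its error probabilities mu and lambda (maximum; 0 for an empty index set).\<close>
definition id_mu :: "('x \<Rightarrow> 'y pmf) \<Rightarrow> nat \<Rightarrow> (nat \<Rightarrow> 'x pmf) \<Rightarrow> (nat \<Rightarrow> 'y set) \<Rightarrow> real" where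
  "id_mu W N Q D = Max ({measure_pmf.prob (out_dist W (Q i)) (- D i) | i. i \<in> {1..N}} \<union> {0})"

definition id_lambda :: "('x \<Rightarrow> 'y pmf) \<Rightarrow> nat \<Rightarrow> (nat \<Rightarrow> 'x pmf) \<Rightarrow> (nat \<Rightarrow> 'y set) \<Rightarrow> real" where
  "id_lambda W N Q D = Max ({measure_pmf.prob (out_dist W (Q j)) (D i) | i j.
       i \<in> {1..N} \<and> j \<in> {1..N} \<and> i \<noteq> j} \<union> {0})"

end

theory Submission
  imports Defs "HOL-Probability.Probability"
begin


lemma intg_bounded:
  fixes g :: "'a \<Rightarrow> real"
  assumes "\<And>x. \<bar>g x\<bar> \<le> B"
  shows "integrable (measure_pmf q) g"
  by (rule measure_pmf.integrable_const_bound[where B=B]) (use assms in auto)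

lemma exp_bind:
  fixes g :: "'b \<Rightarrow> real"
  assumes "\<And>y. 0 \<le> g y" "\<And>y. g y \<le> B"
  shows "measure_pmf.expectation (bind_pmf q N) g =
         measure_pmf.expectation q (\<lambda>x. measure_pmf.expectation (N x) g)"
proof -
  have gb: "\<And>y. \<bar>g y\<bar> \<le> B" using assms by (metis abs_of_nonneg)
  have i1: "\<And>M. integrable (measure_pmf M) g" by (rule intg_bounded[OF gb])
  have n2: "\<And>x. 0 \<le> measure_pmf.expectation (N x) g"
    by (rule integral_nonneg_AE) (use assms in auto)
  have b2: "\<And>x. measure_pmf.expectation (N x) g \<le> B"
    using measure_pmf.integral_le_const[of "N _" g B] i1 assms by auto
  have i2: "integrable (measure_pmf q) (\<lambda>x. measure_pmf.expectation (N x) g)"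
    by (rule intg_bounded[where B=B]) (use n2 b2 in auto)
  have "ennreal (measure_pmf.expectation (bind_pmf q N) g) = (\<integral>\<^sup>+y. ennreal (g y) \<partial>bind_pmf q N)"
    by (rule nn_integral_eq_integral[symmetric]) (use i1 assms in auto)
  also have "\<dots> = (\<integral>\<^sup>+x. \<integral>\<^sup>+y. ennreal (g y) \<partial>N x \<partial>q)" by simp
  also have "\<dots> = (\<integral>\<^sup>+x. ennreal (measure_pmf.expectation (N x) g) \<partial>q)"
    by (intro nn_integral_cong nn_integral_eq_integral) (use i1 assms in auto)
  also have "\<dots> = ennreal (measure_pmf.expectation q (\<lambda>x. measure_pmf.expectation (N x) g))"
    by (rule nn_integral_eq_integral) (use i2 n2 in auto)
  finally show ?thesis
    by (subst (asm) ennreal_inj) (auto intro!: integral_nonneg_AE simp: assms n2)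
qed

lemma prob_bind:
  "measure_pmf.prob (bind_pmf q N) S = measure_pmf.expectation q (\<lambda>x. measure_pmf.prob (N x) S)"
proof -
  have "measure_pmf.prob (bind_pmf q N) S = measure_pmf.expectation (bind_pmf q N) (indicator S)"
    by simp
  also have "\<dots> = measure_pmf.expectation q (\<lambda>x. measure_pmf.expectation (N x) (indicator S))"
    by (rule exp_bind[where B=1]) (auto simp: indicator_def)
  finally show ?thesis by simp
qed

lemma tail_compl_small:
  fixes W :: "'x \<Rightarrow> 'y pmf"
  assumes C: "C > 0"
  shows "measure_pmf.prob (out_dist W p) {y. \<not> pmf (W x) y / pmf (out_dist W p) y \<le> C} \<le> 1 / C"
proof -
  let ?Q = "out_dist W p"
  let ?S = "{y. \<not> pmf (W x) y / pmf ?Q y \<le> C}"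
  have pt: "pmf ?Q y \<le> pmf (W x) y / C" if "y \<in> ?S" for y
  proof -
    have h: "pmf (W x) y / pmf ?Q y > C" using that by auto
    then have "pmf ?Q y \<noteq> 0" using C by auto
    then have "pmf ?Q y > 0" using pmf_nonneg[of ?Q y] by linarith
    with h C show ?thesis by (simp add: field_simps)
  qed
  have "measure_pmf.prob ?Q ?S = infsetsum (pmf ?Q) ?S" by (rule measure_pmf_conv_infsetsum)
  also have "\<dots> \<le> infsetsum (\<lambda>y. pmf (W x) y / C) ?S"
    by (rule infsetsum_mono) (use pt in \<open>auto simp: divide_inverse intro!: abs_summable_on_cmult_left\<close>)
  also have "\<dots> = infsetsum (pmf (W x)) ?S / C" by (rule infsetsum_cdiv) auto
  also have "\<dots> = measure_pmf.prob (W x) ?S / C" by (simp add: measure_pmf_conv_infsetsum)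
  also have "\<dots> \<le> 1 / C" using C by (intro divide_right_mono) auto
  finally show ?thesis .
qed

lemma pair_marg:
  assumes "finite I" "k \<in> I" "k' \<in> I" "k \<noteq> k'"
  shows "map_pmf (\<lambda>u. (u k', u k)) (Pi_pmf I d (\<lambda>_. p)) = pair_pmf p p"
proof -
  define I' where "I' = I - {k'}"
  have I: "I = insert k' I'" "k' \<notin> I'" "finite I'" "k \<in> I'" using assms by (auto simp: I'_def)
  have "map_pmf (\<lambda>u. (u k', u k)) (Pi_pmf I d (\<lambda>_. p))
     = map_pmf (\<lambda>u. (u k', u k)) (map_pmf (\<lambda>(y,f). f(k':=y)) (pair_pmf p (Pi_pmf I' d (\<lambda>_. p))))"
    unfolding I(1) by (subst Pi_pmf_insert) (use I in auto)
  also have "\<dots> = map_pmf (\<lambda>(a, b). (id a, (\<lambda>f. f k) b)) (pair_pmf p (Pi_pmf I' d (\<lambda>_. p)))"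
    by (simp add: pmf.map_comp o_def case_prod_unfold) (use I assms in \<open>intro map_pmf_cong, auto\<close>)
  also have "\<dots> = pair_pmf (map_pmf id p) (map_pmf (\<lambda>f. f k) (Pi_pmf I' d (\<lambda>_. p)))"
    by (rule map_pair)
  also have "\<dots> = pair_pmf p p" using Pi_pmf_component[OF I(3), of k d "\<lambda>_. p"] I by simp
  finally show ?thesis .
qed


lemma coding:
  fixes W :: "'x \<Rightarrow> 'y pmf" and p :: "'x pmf" and C \<beta> \<beta>' :: real and K L :: nat
  assumes C: "C > 0" and bpos: "\<beta> > 0" "\<beta>' > 0" and K: "K \<ge> 1"
    and L: "real L \<le> (1 - 1/\<beta> - 1/\<beta>') * real K"
  shows "\<exists>c :: nat \<Rightarrow> 'x.
     (\<forall>j<L. measure_pmf.prob (W (c j)) {y. pmf (W (c j)) y / pmf (out_dist W p) y \<le> C}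
               \<le> \<beta> * info_tail W p C)
   \<and> (\<forall>j<L. (\<Sum>j'\<in>{..<L}-{j}. measure_pmf.prob (W (c j))
               {y. \<not> pmf (W (c j')) y / pmf (out_dist W p) y \<le> C}) \<le> \<beta>' * (real K - 1) / C)"
proof -
  define Q where "Q = out_dist W p"
  define T where "T x = {y. pmf (W x) y / pmf Q y \<le> C}" for x
  define Ex where "Ex x = {y. \<not> pmf (W x) y / pmf Q y \<le> C}" for x
  define f where "f x = measure_pmf.prob (W x) (T x)" for x
  define t where "t = info_tail W p C"
  have t_eq: "t = measure_pmf.expectation p f"
    by (simp add: t_def info_tail_def f_def[abs_def] T_def Q_def)
  have f0: "0 \<le> f x" and f1: "f x \<le> 1" for x by (auto simp: f_def)
  have fint: "integrable (measure_pmf q) (\<lambda>x. f (h x))" for q :: "'z pmf" and h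
    by (rule intg_bounded[where B=1]) (use f0 f1 in \<open>auto simp: abs_le_iff\<close>)
  have t0: "0 \<le> t" unfolding t_eq by (rule integral_nonneg_AE) (use f0 in auto)
  have tz: "f x = 0" if "t = 0" "x \<in> set_pmf p" for x
  proof -
    have "AE x in measure_pmf p. f x = 0"
      using integral_nonneg_eq_0_iff_AE[of "measure_pmf p" f] fint[of p id] f0 that(1) t_eq by auto
    then show ?thesis using that(2) by (simp add: AE_measure_pmf_iff)
  qed
  define I where "I = {..<K}"
  have finI: "finite I" and cardI: "card I = K" by (auto simp: I_def)
  define P where "P = Pi_pmf I undefined (\<lambda>_. p)"
  define G where "G k u = (\<Sum>k'\<in>I-{k}. measure_pmf.prob (W (u k)) (Ex (u k')))" for k u
  define a where "a = 1 / (\<beta> * t)"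
  define bb where "bb = C / (\<beta>' * (real K - 1))"
  define X where "X u = (\<Sum>k\<in>I. a * f (u k) + bb * G k u)" for u
  have a0: "a \<ge> 0" using bpos t0 by (simp add: a_def)
  have bb0: "bb \<ge> 0" using bpos C K by (simp add: bb_def)
  have G0: "0 \<le> G k u" for k u by (simp add: G_def sum_nonneg)
  have probint: "integrable (measure_pmf q) (\<lambda>x. measure_pmf.prob (M x) (S x))" for q :: "'z pmf" and M S
    by (rule intg_bounded[where B=1]) auto
  have Gint: "integrable (measure_pmf P) (G k)" for k
    unfolding G_def by (intro Bochner_Integration.integrable_sum probint)
  have Ef: "measure_pmf.expectation P (\<lambda>u. f (u k)) = t" if "k \<in> I" for k
  proof -
    have "measure_pmf.expectation P (\<lambda>u. f (u k)) = measure_pmf.expectation (map_pmf (\<lambda>u. u k) P) f"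
      by simp
    also have "map_pmf (\<lambda>u. u k) P = p" using Pi_pmf_component[OF finI, of k undefined "\<lambda>_. p"] that
      by (simp add: P_def)
    finally show ?thesis using t_eq by simp
  qed
  have Epair: "measure_pmf.expectation P (\<lambda>u. measure_pmf.prob (W (u k)) (Ex (u k'))) \<le> 1 / C"
    if "k \<in> I" "k' \<in> I" "k \<noteq> k'" for k k'
  proof -
    define g where "g = (\<lambda>(b, a). measure_pmf.prob (W a) (Ex b))"
    have "measure_pmf.expectation P (\<lambda>u. measure_pmf.prob (W (u k)) (Ex (u k')))
        = measure_pmf.expectation (map_pmf (\<lambda>u. (u k', u k)) P) g" by (simp add: g_def)
    also have "map_pmf (\<lambda>u. (u k', u k)) P = pair_pmf p p"
      unfolding P_def by (rule pair_marg) (use that finI in auto)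
    also have "pair_pmf p p = bind_pmf p (\<lambda>b. bind_pmf p (\<lambda>a. return_pmf (b, a)))"
      by (simp add: pair_pmf_def)
    also have "measure_pmf.expectation \<dots> g
        = measure_pmf.expectation p (\<lambda>b. measure_pmf.expectation (bind_pmf p (\<lambda>a. return_pmf (b, a))) g)"
      by (rule exp_bind[where B=1]) (auto simp: g_def)
    also have "\<dots> = measure_pmf.expectation p (\<lambda>b. measure_pmf.expectation p (\<lambda>a. measure_pmf.prob (W a) (Ex b)))"
    proof (intro Bochner_Integration.integral_cong refl)
      fix b
      have "measure_pmf.expectation (bind_pmf p (\<lambda>a. return_pmf (b, a))) g
          = measure_pmf.expectation p (\<lambda>a. measure_pmf.expectation (return_pmf (b, a)) g)"
        by (rule exp_bind[where B=1]) (auto simp: g_def)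
      then show "measure_pmf.expectation (bind_pmf p (\<lambda>a. return_pmf (b, a))) g
          = measure_pmf.expectation p (\<lambda>a. measure_pmf.prob (W a) (Ex b))" by (simp add: g_def)
    qed
    also have "\<dots> = measure_pmf.expectation p (\<lambda>b. measure_pmf.prob Q (Ex b))"
      by (simp add: Q_def out_dist_def prob_bind)
    also have "\<dots> \<le> 1 / C"
    proof (rule measure_pmf.integral_le_const)
      show "integrable (measure_pmf p) (\<lambda>b. measure_pmf.prob Q (Ex b))" by (rule probint)
      show "AE x in measure_pmf p. measure_pmf.prob Q (Ex x) \<le> 1 / C"
        using tail_compl_small[OF C, of W p] by (simp add: Q_def Ex_def)
    qed
    finally show ?thesis .
  qed
  have EG: "measure_pmf.expectation P (G k) \<le> (real K - 1) / C" if "k \<in> I" for k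
  proof -
    have "measure_pmf.expectation P (G k)
        = (\<Sum>k'\<in>I-{k}. measure_pmf.expectation P (\<lambda>u. measure_pmf.prob (W (u k)) (Ex (u k'))))"
      unfolding G_def by (rule Bochner_Integration.integral_sum) (rule probint)
    also have "\<dots> \<le> (\<Sum>k'\<in>I-{k}. 1 / C)" by (rule sum_mono) (use Epair that in auto)
    also have "\<dots> = (real K - 1) / C" using that finI cardI K by (simp add: card_Diff_singleton of_nat_diff)
    finally show ?thesis .
  qed
  have EX: "measure_pmf.expectation P X \<le> real K * (1/\<beta> + 1/\<beta>')"
  proof -
    have "measure_pmf.expectation P X
       = (\<Sum>k\<in>I. measure_pmf.expectation P (\<lambda>u. a * f (u k) + bb * G k u))"
      unfolding X_def
      by (rule Bochner_Integration.integral_sum) (intro Bochner_Integration.integrable_add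
            integrable_mult_right fint Gint)
    also have "\<dots> = (\<Sum>k\<in>I. a * t + bb * measure_pmf.expectation P (G k))"
    proof (rule sum.cong[OF refl])
      fix k assume k: "k \<in> I"
      have "measure_pmf.expectation P (\<lambda>u. a * f (u k) + bb * G k u)
          = measure_pmf.expectation P (\<lambda>u. a * f (u k)) + measure_pmf.expectation P (\<lambda>u. bb * G k u)"
        by (rule Bochner_Integration.integral_add) (intro integrable_mult_right fint Gint)+
      then show "measure_pmf.expectation P (\<lambda>u. a * f (u k) + bb * G k u)
          = a * t + bb * measure_pmf.expectation P (G k)" using Ef[OF k] by simp
    qed
    also have "\<dots> \<le> (\<Sum>k\<in>I. 1/\<beta> + 1/\<beta>')"
    proof (rule sum_mono)
      fix k assume k: "k \<in> I"
      have 1: "a * t \<le> 1/\<beta>"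
        using bpos t0 by (cases "t = 0") (auto simp: a_def)
      have "bb * measure_pmf.expectation P (G k) \<le> bb * ((real K - 1) / C)"
        by (rule mult_left_mono[OF EG[OF k] bb0])
      also have "\<dots> \<le> 1/\<beta>'"
        using bpos C K by (cases "real K - 1 = 0") (auto simp: bb_def)
      finally show "a * t + bb * measure_pmf.expectation P (G k) \<le> 1/\<beta> + 1/\<beta>'" using 1 by linarith
    qed
    also have "\<dots> = real K * (1/\<beta> + 1/\<beta>')" using cardI by simp
    finally show ?thesis .
  qed
  define good where "good u k \<longleftrightarrow> f (u k) \<le> \<beta> * t \<and> G k u \<le> \<beta>' * (real K - 1) / C" for u k
  have bad: "real (card {k\<in>I. \<not> good u k}) \<le> X u" if u: "u \<in> set_pmf P" for u
  proof -
    have uk: "u k \<in> set_pmf p" if "k \<in> I" for k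
      using u that finI by (auto simp: P_def set_Pi_pmf PiE_dflt_def)
    have "real (card {k\<in>I. \<not> good u k}) = (\<Sum>k\<in>{k\<in>I. \<not> good u k}. 1)" by simp
    also have "\<dots> = (\<Sum>k\<in>I. if \<not> good u k then 1 else 0)"
      by (rule sum.inter_filter[OF finI])
    also have "\<dots> \<le> X u" unfolding X_def
    proof (rule sum_mono)
      fix k assume k: "k \<in> I"
      have nn: "0 \<le> a * f (u k)" "0 \<le> bb * G k u" using a0 bb0 f0 G0 by auto
      show "(if \<not> good u k then 1 else 0) \<le> a * f (u k) + bb * G k u"
      proof (cases "good u k")
        case True then show ?thesis using nn by simp
      next
        case False
        then consider "f (u k) > \<beta> * t" | "G k u > \<beta>' * (real K - 1) / C" unfolding good_def by linarith
        then show ?thesis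
        proof cases
          case 1
          have "t \<noteq> 0" using 1 tz[OF _ uk[OF k]] by auto
          then have "t > 0" using t0 by auto
          then have "a * f (u k) \<ge> 1" using 1 bpos by (simp add: a_def field_simps)
          then show ?thesis using nn False by simp
        next
          case 2
          have "real K - 1 \<noteq> 0"
          proof
            assume "real K - 1 = 0"
            then have "K = 1" by simp
            then have "I - {k} = {}" using k by (auto simp: I_def)
            then have "G k u = 0" unfolding G_def by (simp only: sum.empty)
            then show False using 2 by (simp add: \<open>K = 1\<close>)
          qed
          then have Kp: "real K - 1 > 0" using K by simp
          then have "bb * G k u \<ge> 1" using 2 bpos C by (simp add: bb_def field_simps)
          then show ?thesis using nn False by simp
        qed
      qed
    qed
    finally show ?thesis .
  qed
  have Xint: "integrable (measure_pmf P) X" unfolding X_def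
    by (intro Bochner_Integration.integrable_sum Bochner_Integration.integrable_add
            integrable_mult_right fint Gint)
  obtain u where u: "u \<in> set_pmf P" and Lgood: "L \<le> card {k\<in>I. good u k}"
  proof (rule ccontr)
    assume "\<not> thesis"
    with that have H: "\<forall>u\<in>set_pmf P. card {k\<in>I. good u k} < L" by (meson not_le)
    have "\<forall>u\<in>set_pmf P. real K - real L + 1 \<le> X u"
    proof
      fix u assume u: "u \<in> set_pmf P"
      have un: "{k\<in>I. good u k} \<union> {k\<in>I. \<not> good u k} = I" by auto
      have "card ({k\<in>I. good u k} \<union> {k\<in>I. \<not> good u k}) = card {k\<in>I. good u k} + card {k\<in>I. \<not> good u k}"
        by (rule card_Un_disjoint) (use finI in auto)
      then have ce: "real (card {k\<in>I. good u k}) + real (card {k\<in>I. \<not> good u k}) = real K"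
        unfolding un cardI by (metis of_nat_add)
      have "card {k\<in>I. good u k} < L" using H u by blast
      then have "real (card {k\<in>I. good u k}) \<le> real L - 1" by linarith
      then have "real K - real L + 1 \<le> real (card {k\<in>I. \<not> good u k})" using ce by linarith
      then show "real K - real L + 1 \<le> X u" using bad[OF u] by linarith
    qed
    then have "real K - real L + 1 \<le> measure_pmf.expectation P X"
      by (intro measure_pmf.integral_ge_const Xint) (simp add: AE_measure_pmf_iff)
    moreover have "real K * (1/\<beta> + 1/\<beta>') \<le> real K - real L" using L by (simp add: algebra_simps)
    ultimately show False using EX by linarith
  qed
  obtain S where S: "S \<subseteq> {k\<in>I. good u k}" "card S = L"
    using obtain_subset_with_card_n[OF Lgood] by blast
  have finS: "finite S" by (rule finite_subset[OF S(1)]) (use finI in simp)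
  obtain g where g: "bij_betw g {..<L} S"
    using bij_betw_iff_card[of "{..<L}" S] finS S by auto
  define c where "c j = u (g j)" for j
  show ?thesis
  proof (intro exI[of _ c] conjI allI impI)
    fix j assume j: "j < L"
    have gj: "g j \<in> S" using g j by (auto dest: bij_betw_apply)
    then have gd: "good u (g j)" and gI: "g j \<in> I" using S by auto
    show "measure_pmf.prob (W (c j)) {y. pmf (W (c j)) y / pmf (out_dist W p) y \<le> C}
               \<le> \<beta> * info_tail W p C"
      using gd by (simp add: good_def f_def T_def c_def Q_def t_def)
    have inj: "inj_on g ({..<L} - {j})" using g by (auto simp: bij_betw_def inj_on_def)
    have sub: "g ` ({..<L} - {j}) \<subseteq> I - {g j}"
      using g S j by (auto simp: bij_betw_def inj_on_def)
    have "(\<Sum>j'\<in>{..<L}-{j}. measure_pmf.prob (W (c j)) (Ex (c j')))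
        = (\<Sum>k'\<in>g ` ({..<L}-{j}). measure_pmf.prob (W (u (g j))) (Ex (u k')))"
      by (subst sum.reindex[OF inj]) (simp add: c_def)
    also have "\<dots> \<le> G (g j) u" unfolding G_def
      by (rule sum_mono2) (use finI sub in auto)
    also have "\<dots> \<le> \<beta>' * (real K - 1) / C" using gd by (simp add: good_def)
    finally show "(\<Sum>j'\<in>{..<L}-{j}. measure_pmf.prob (W (c j))
               {y. \<not> pmf (W (c j')) y / pmf (out_dist W p) y \<le> C}) \<le> \<beta>' * (real K - 1) / C"
      by (simp add: Ex_def Q_def)
  qed
qed



lemma bad_card:
  fixes m b s :: nat
  assumes w: "w \<in> PiE {..<m} (\<lambda>_. {..<b})"
  shows "card {w'\<in>PiE {..<m} (\<lambda>_. {..<b}). s \<le> card {c\<in>{..<m}. w c = w' c}} \<le> 2^m * b^(m - s)"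
proof -
  let ?Wd = "PiE {..<m} (\<lambda>_. {..<b})"
  let ?SS = "{S. S \<subseteq> {..<m} \<and> card S = s}"
  define B where "B S = PiE {..<m} (\<lambda>c. if c \<in> S then {w c} else {..<b})" for S
  have sub: "{w'\<in>?Wd. s \<le> card {c\<in>{..<m}. w c = w' c}} \<subseteq> (\<Union>S\<in>?SS. B S)"
  proof
    fix w' assume "w' \<in> {w'\<in>?Wd. s \<le> card {c\<in>{..<m}. w c = w' c}}"
    then have w': "w' \<in> ?Wd" and sc: "s \<le> card {c\<in>{..<m}. w c = w' c}" by auto
    obtain S where S: "S \<subseteq> {c\<in>{..<m}. w c = w' c}" "card S = s"
      using obtain_subset_with_card_n[OF sc] by blast
    have "w' \<in> B S" using w' S unfolding B_def by (auto simp: PiE_iff)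
    moreover have "S \<in> ?SS" using S by auto
    ultimately show "w' \<in> (\<Union>S\<in>?SS. B S)" by blast
  qed
  have cB: "card (B S) = b^(m - s)" if "S \<in> ?SS" for S
  proof -
    have "card (B S) = (\<Prod>c\<in>{..<m}. card (if c \<in> S then {w c} else {..<b}))"
      unfolding B_def by (rule card_PiE) simp
    also have "\<dots> = (\<Prod>c\<in>{..<m}. if c \<in> S then 1 else b)"
      by (rule prod.cong) auto
    also have "\<dots> = b ^ card ({..<m} - S)"
    proof -
      have eqS: "{..<m} \<inter> - {x. x \<in> S} = {..<m} - S" by auto
      show ?thesis using prod.If_cases[of "{..<m}" "\<lambda>c. c \<in> S" "\<lambda>_. 1" "\<lambda>_. b"] eqS by simp
    qed
    also have "card ({..<m} - S) = m - s" using that by (auto simp: card_Diff_subset finite_subset)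
    finally show ?thesis .
  qed
  have fSS: "finite ?SS" by (rule finite_subset[of _ "Pow {..<m}"]) auto
  have cSS: "card ?SS \<le> 2^m"
  proof -
    have "card ?SS \<le> card (Pow {..<m::nat})" by (rule card_mono) auto
    then show ?thesis by (simp add: card_Pow)
  qed
  have "card {w'\<in>?Wd. s \<le> card {c\<in>{..<m}. w c = w' c}} \<le> card (\<Union>S\<in>?SS. B S)"
    by (rule card_mono[OF _ sub]) (use fSS in \<open>auto simp: B_def intro!: finite_PiE\<close>)
  also have "\<dots> \<le> (\<Sum>S\<in>?SS. card (B S))" by (rule card_UN_le[OF fSS])
  also have "\<dots> = card ?SS * b^(m - s)" using cB by simp
  also have "\<dots> \<le> 2^m * b^(m - s)" using cSS by simp
  finally show ?thesis .
qed

lemma words_exist: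
  fixes m b s N :: nat
  assumes b: "b \<ge> 1" and s: "s \<le> m" and N: "N * (2^m * b^(m - s)) \<le> b^m"
  shows "\<exists>F. F \<subseteq> PiE {..<m} (\<lambda>_. {..<b}) \<and> card F = N \<and>
     (\<forall>w\<in>F. \<forall>w'\<in>F. w \<noteq> w' \<longrightarrow> card {c\<in>{..<m}. w c = w' c} < s)"
proof -
  let ?Wd = "PiE {..<m} (\<lambda>_. {..<b})"
  define X where "X = 2^m * b^(m - s)"
  have X1: "X \<ge> 1" using b by (simp add: X_def)
  have cW: "card ?Wd = b^m" by (simp add: card_PiE)
  have fW: "finite ?Wd" by (simp add: finite_PiE)
  define Bad where "Bad w = {w'\<in>?Wd. s \<le> card {c\<in>{..<m}. w c = w' c}}" for w
  have "n \<le> N \<Longrightarrow> \<exists>F. F \<subseteq> ?Wd \<and> card F = n \<and>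
     (\<forall>w\<in>F. \<forall>w'\<in>F. w \<noteq> w' \<longrightarrow> card {c\<in>{..<m}. w c = w' c} < s)" for n
  proof (induction n)
    case 0 then show ?case by (intro exI[of _ "{}"]) auto
  next
    case (Suc n)
    then obtain F where F: "F \<subseteq> ?Wd" "card F = n"
      "\<forall>w\<in>F. \<forall>w'\<in>F. w \<noteq> w' \<longrightarrow> card {c\<in>{..<m}. w c = w' c} < s" by auto
    have fF: "finite F" using F(1) fW finite_subset by blast
    have "card (\<Union>w\<in>F. Bad w) \<le> (\<Sum>w\<in>F. card (Bad w))" by (rule card_UN_le[OF fF])
    also have "\<dots> \<le> (\<Sum>w\<in>F. X)"
      by (rule sum_mono) (use F(1) bad_card in \<open>auto simp: Bad_def X_def\<close>)
    also have "\<dots> = n * X" using F(2) by simp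
    also have "\<dots> < Suc n * X" using X1 by simp
    also have "\<dots> \<le> N * X" using Suc.prems by (intro mult_right_mono) auto
    also have "\<dots> \<le> card ?Wd" using N cW by (simp add: X_def)
    finally have "card (\<Union>w\<in>F. Bad w) < card ?Wd" .
    moreover have "finite (\<Union>w\<in>F. Bad w)"
      by (rule finite_subset[OF _ fW]) (auto simp: Bad_def)
    ultimately have "\<not> ?Wd \<subseteq> (\<Union>w\<in>F. Bad w)"
      using card_mono[of "\<Union>w\<in>F. Bad w" ?Wd] by (auto dest: card_mono)
    then obtain v where v: "v \<in> ?Wd" "v \<notin> (\<Union>w\<in>F. Bad w)" by blast
    have vF: "v \<notin> F"
    proof
      assume "v \<in> F"
      have "card {c\<in>{..<m}. v c = v c} = m" by simp
      then have "v \<in> Bad v" using v(1) s by (simp add: Bad_def)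
      then show False using v(2) \<open>v \<in> F\<close> by blast
    qed
    have nb: "card {c\<in>{..<m}. w c = v c} < s" if "w \<in> F" for w
      using v that by (auto simp: Bad_def not_le)
    have nb': "card {c\<in>{..<m}. v c = w c} < s" if "w \<in> F" for w
    proof -
      have "{c\<in>{..<m}. v c = w c} = {c\<in>{..<m}. w c = v c}" by auto
      then show ?thesis using nb[OF that] by simp
    qed
    show ?case
    proof (intro exI[of _ "insert v F"] conjI)
      show "insert v F \<subseteq> ?Wd" using F(1) v(1) by auto
      show "card (insert v F) = Suc n" using vF fF F(2) by simp
      show "\<forall>w\<in>insert v F. \<forall>w'\<in>insert v F. w \<noteq> w' \<longrightarrow> card {c\<in>{..<m}. w c = w' c} < s"
        using F(3) nb nb' by auto
    qed
  qed
  then show ?thesis by blast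
qed



lemma numeric:
  fixes \<tau> \<kappa> :: real and M N :: nat
  assumes tau: "\<tau> > 0" "\<tau> < 1/3" and kap: "\<kappa> > 0" "\<kappa> < 1"
    and cond: "\<kappa> * ln (1 / \<tau> - 1) > ln 2 + 1"
    and M: "M > 0"
    and N: "int N = \<lfloor>exp (\<tau> * real M) / (real M * exp 1)\<rfloor>"
    and b_def: "b = nat \<lfloor>1 / \<tau>\<rfloor>" and m_def: "m = M div b"
    and s_def: "s = nat \<lfloor>\<kappa> * real m\<rfloor> + 1"
    and N2: "N \<ge> 2"
  shows "b \<ge> 1" "m \<ge> 1" "s \<le> m" "N * (2^m * b^(m - s)) \<le> b^m" "m * b \<le> M"
    "\<And>a::nat. a < s \<Longrightarrow> real a \<le> \<kappa> * real m"
proof -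
  have it: "1 / \<tau> > 3" using tau by (simp add: field_simps)
  have bge: "real b \<ge> 1 / \<tau> - 1" "real b \<le> 1 / \<tau>" "real b \<ge> 3"
  proof -
    have f1: "real_of_int \<lfloor>1 / \<tau>\<rfloor> > 1 / \<tau> - 1" "real_of_int \<lfloor>1 / \<tau>\<rfloor> \<le> 1 / \<tau>"
      by linarith+
    have f3: "\<lfloor>1 / \<tau>\<rfloor> \<ge> 3" using it by (simp add: le_floor_iff)
    then have "0 \<le> \<lfloor>1 / \<tau>\<rfloor>" by linarith
    then have "real b = real_of_int \<lfloor>1 / \<tau>\<rfloor>" unfolding b_def by (rule of_nat_nat)
    then show "real b \<ge> 1 / \<tau> - 1" "real b \<le> 1 / \<tau>" "real b \<ge> 3" using f1 f3 by auto
  qed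
  show b1: "b \<ge> 1" using bge by linarith
  have bpos: "real b > 0" using bge by linarith
  have mb: "m * b \<le> M" unfolding m_def by (metis div_mult_mod_eq le_add1)
  show "m * b \<le> M" by (rule mb)
  have mreal: "real m \<ge> real M / real b - 1"
  proof -
    have e: "M = m * b + M mod b" unfolding m_def by simp
    have "M mod b < b" using b1 by simp
    then have "M < m * b + b" using e by linarith
    then have "real M < real (m * b + b)" by (simp only: of_nat_less_iff)
    then have "real M < (real m + 1) * real b" by (simp add: algebra_simps)
    then show ?thesis using bpos by (simp add: field_simps)
  qed
  have tM: "\<tau> * real M \<le> real M / real b"
  proof -
    have tb: "\<tau> * real b \<le> 1" using bge(2) tau by (simp add: field_simps)
    have "\<tau> * real b * real M \<le> real M" using mult_right_mono[OF tb, of "real M"] by simp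
    then show ?thesis using bpos by (simp add: field_simps)
  qed
  have lnM: "ln (real M) \<ge> 0" using M by simp
  have NE: "real N \<le> exp (real m)"
  proof -
    have "real N \<le> exp (\<tau> * real M) / (real M * exp 1)"
    proof -
      have "real N = real_of_int (int N)" by simp
      also have "\<dots> = real_of_int \<lfloor>exp (\<tau> * real M) / (real M * exp 1)\<rfloor>" using N by simp
      also have "\<dots> \<le> exp (\<tau> * real M) / (real M * exp 1)" by (rule of_int_floor_le)
      finally show ?thesis .
    qed
    also have "exp (\<tau> * real M) / (real M * exp 1) = exp (\<tau> * real M - ln (real M) - 1)"
      using M by (simp add: exp_diff)
    also have "\<dots> \<le> exp (real m)" using mreal tM lnM by simp
    finally show ?thesis .
  qed
  show m1: "m \<ge> 1"
  proof (rule ccontr)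
    assume "\<not> m \<ge> 1" then have "m = 0" by simp
    then show False using NE N2 by simp
  qed
  have km: "\<kappa> * real m < real m" using kap m1 by simp
  have fl0: "0 \<le> \<lfloor>\<kappa> * real m\<rfloor>" using kap by simp
  have "\<lfloor>\<kappa> * real m\<rfloor> < int m" using km by (simp add: floor_less_iff)
  then have "nat \<lfloor>\<kappa> * real m\<rfloor> < m" using fl0 by (simp add: nat_less_iff)
  then show sm: "s \<le> m" unfolding s_def by simp
  show "\<And>a::nat. a < s \<Longrightarrow> real a \<le> \<kappa> * real m"
  proof -
    fix a :: nat assume "a < s"
    then have "a \<le> nat \<lfloor>\<kappa> * real m\<rfloor>" unfolding s_def by simp
    then have "int a \<le> \<lfloor>\<kappa> * real m\<rfloor>" using fl0 by (simp add: le_nat_iff)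
    then show "real a \<le> \<kappa> * real m" by (simp add: le_floor_iff)
  qed
  have lnb: "\<kappa> * ln (real b) \<ge> ln 2 + 1"
  proof -
    have "ln (1 / \<tau> - 1) \<le> ln (real b)" using bge it by simp
    then have "\<kappa> * ln (1 / \<tau> - 1) \<le> \<kappa> * ln (real b)" using kap by simp
    then show ?thesis using cond by simp
  qed
  have e1: "2 * exp 1 \<le> real b powr \<kappa>"
  proof -
    have "2 * exp 1 = exp (ln 2 + (1::real))" by (simp add: exp_add)
    also have "\<dots> \<le> exp (\<kappa> * ln (real b))" using lnb by simp
    also have "\<dots> = real b powr \<kappa>" using bpos by (simp add: powr_def)
    finally show ?thesis .
  qed
  have "real N * 2^m \<le> exp (real m) * 2^m" using NE by simp
  also have "exp (real m) * 2^m = (2 * exp 1)^m" by (simp add: exp_of_nat_mult[symmetric] power_mult_distrib mult.commute)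
  also have "\<dots> \<le> (real b powr \<kappa>)^m" by (rule power_mono[OF e1]) simp
  also have "\<dots> = real b powr (\<kappa> * real m)" using bpos by (simp add: powr_realpow[symmetric] powr_powr)
  also have "\<dots> \<le> real b powr (real s)"
  proof (rule powr_mono)
    show "\<kappa> * real m \<le> real s" unfolding s_def using kap m1 by linarith
  qed (use bge in auto)
  also have "\<dots> = real b ^ s" using bpos by (simp add: powr_realpow)
  finally have key: "real N * 2^m \<le> real b ^ s" .
  have "real N * (2^m * real b^(m - s)) \<le> real b ^ s * real b^(m - s)"
    using mult_right_mono[OF key, of "real b^(m - s)"] by (simp add: mult.assoc)
  also have "\<dots> = real b ^ m" using sm by (simp add: power_add[symmetric])
  finally have "real (N * (2^m * b^(m - s))) \<le> real (b^m)" by simp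
  then show "N * (2^m * b^(m - s)) \<le> b^m" by (simp only: of_nat_le_iff)
qed



lemma max0_le:
  fixes A :: "real set"
  assumes "finite A" "\<And>x. x \<in> A \<Longrightarrow> x \<le> B" "0 \<le> B"
  shows "Max (A \<union> {0}) \<le> B"
  using assms by (subst Max_le_iff) auto

lemma idx_inj:
  fixes b c c' v v' :: nat
  assumes "v < b" "v' < b" "c * b + v = c' * b + v'"
  shows "c = c' \<and> v = v'"
proof -
  have b0: "b > 0" using assms by simp
  have "(c * b + v) div b = c" "(c * b + v) mod b = v" using assms(1) b0 by simp_all
  moreover have "(c' * b + v') div b = c'" "(c' * b + v') mod b = v'" using assms(2) b0 by simp_all
  ultimately show ?thesis using assms(3) by metis
qed

lemma idx_lt:
  fixes b c m v :: nat
  assumes "c < m" "v < b"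
  shows "c * b + v < m * b"
proof -
  have "c * b + v < c * b + b" using assms by simp
  also have "\<dots> = Suc c * b" by simp
  also have "\<dots> \<le> m * b" using assms by (intro mult_right_mono) auto
  finally show ?thesis .
qed

theorem theorem1:
  fixes \<alpha> \<alpha>' \<beta> \<beta>' \<tau> \<kappa> :: real
  assumes "\<alpha> > 0" "\<alpha>' > 0" "\<beta> > 0" "\<beta>' > 0" "\<tau> > 0" "\<kappa> > 0"
    and "\<kappa> * ln (1 / \<tau> - 1) > ln 2 + 1"
    and "\<tau> < 1 / 3" and "\<kappa> < 1"
    and "1 / \<alpha> + 1 / \<alpha>' < 1"
    and "1 - 1 / \<beta> - 1 / \<beta>' > 0"
  shows "\<forall>(M::nat) (C::real) (W :: 'x::countable \<Rightarrow> 'y::countable pmf) (p :: 'x pmf).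
     M > 0 \<longrightarrow> C > 0 \<longrightarrow>
     \<beta> * info_tail W p C
       + \<alpha>' * \<beta>' * (1 / C) * real_of_int \<lceil>real M / (1 - 1 / \<beta> - 1 / \<beta>')\<rceil> < 1 \<longrightarrow>
     (\<exists>(N::nat) (Q :: nat \<Rightarrow> 'x pmf) (D :: nat \<Rightarrow> 'y set).
        id_mu W N Q D \<le> \<alpha> * \<beta> * info_tail W p C
      \<and> id_lambda W N Q D \<le> \<kappa> + \<alpha>' * \<beta>' * (1 / C)
            * real_of_int \<lceil>real M / (1 - 1 / \<beta> - 1 / \<beta>')\<rceil>
      \<and> int N = \<lfloor>exp (\<tau> * real M) / (real M * exp 1)\<rfloor>)"
proof (intro allI impI)
  fix M :: nat and C :: real and W :: "'x::countable \<Rightarrow> 'y::countable pmf" and p :: "'x pmf"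
  assume M: "M > 0" and C: "C > 0"
  define \<gamma> where "\<gamma> = 1 - 1 / \<beta> - 1 / \<beta>'"
  have g0: "\<gamma> > 0" using assms by (simp add: \<gamma>_def)
  define Ki where "Ki = \<lceil>real M / \<gamma>\<rceil>"
  have Kipos: "Ki \<ge> 1" using M g0 by (simp add: Ki_def)
  define K where "K = nat Ki"
  have KK: "real K = real_of_int Ki" using Kipos by (simp add: K_def)
  have K1: "K \<ge> 1" using Kipos by (simp add: K_def)
  define t where "t = info_tail W p C"
  have t0: "0 \<le> t" unfolding t_def info_tail_def by (rule integral_nonneg_AE) auto
  have a1: "\<alpha> > 1" "\<alpha>' > 1"
  proof -
    have "1 / \<alpha> < 1" "1 / \<alpha>' < 1" using assms by (smt (verit) divide_pos_pos)+
    then show "\<alpha> > 1" "\<alpha>' > 1" using assms by (simp_all add: field_simps)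
  qed
  define Lam where "Lam = \<beta>' * (real K - 1) / C"
  have Lam0: "0 \<le> Lam" using K1 assms C by (simp add: Lam_def)
  have LamB: "Lam \<le> \<alpha>' * \<beta>' * (1 / C) * real_of_int Ki"
  proof -
    have "1 * real K \<le> \<alpha>' * real K" by (rule mult_right_mono) (use a1 in auto)
    then have "real K - 1 \<le> \<alpha>' * real K" by linarith
    then have "\<beta>' * (real K - 1) \<le> \<beta>' * (\<alpha>' * real K)" using assms by simp
    then have "\<beta>' * (real K - 1) / C \<le> \<beta>' * (\<alpha>' * real K) / C"
      using C by (intro divide_right_mono) auto
    then show ?thesis by (simp add: Lam_def KK mult.assoc mult.left_commute)
  qed
  define N where "N = nat \<lfloor>exp (\<tau> * real M) / (real M * exp 1)\<rfloor>"
  have NN: "int N = \<lfloor>exp (\<tau> * real M) / (real M * exp 1)\<rfloor>"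
    unfolding N_def by (rule nat_0_le) (simp add: M)
  have goalB: "\<kappa> + \<alpha>' * \<beta>' * (1 / C) * real_of_int Ki \<ge> 0"
    using assms C Kipos by simp
  show "\<exists>(N::nat) (Q :: nat \<Rightarrow> 'x pmf) (D :: nat \<Rightarrow> 'y set).
        id_mu W N Q D \<le> \<alpha> * \<beta> * info_tail W p C
      \<and> id_lambda W N Q D \<le> \<kappa> + \<alpha>' * \<beta>' * (1 / C)
            * real_of_int \<lceil>real M / (1 - 1 / \<beta> - 1 / \<beta>')\<rceil>
      \<and> int N = \<lfloor>exp (\<tau> * real M) / (real M * exp 1)\<rfloor>"
  proof (cases "N \<le> 1")
    case True
    define Q :: "nat \<Rightarrow> 'x pmf" where "Q = (\<lambda>_. p)"
    define D :: "nat \<Rightarrow> 'y set" where "D = (\<lambda>_. UNIV)"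
    have "id_mu W N Q D \<le> \<alpha> * \<beta> * t"
      unfolding id_mu_def
      by (rule max0_le) (use t0 assms in \<open>auto simp: D_def\<close>)
    moreover have "id_lambda W N Q D \<le> \<kappa> + \<alpha>' * \<beta>' * (1 / C) * real_of_int Ki"
    proof -
      have E0: "{measure_pmf.prob (out_dist W (Q j)) (D i) | i j.
       i \<in> {1..N} \<and> j \<in> {1..N} \<and> i \<noteq> j} = {}" using True by auto
      show ?thesis unfolding id_lambda_def E0 using goalB by simp
    qed
    ultimately show ?thesis using NN by (auto simp: t_def Ki_def \<gamma>_def)
  next
    case False
    then have N2: "N \<ge> 2" by simp
    define b where "b = nat \<lfloor>1 / \<tau>\<rfloor>"
    define m where "m = M div b"
    define s where "s = nat \<lfloor>\<kappa> * real m\<rfloor> + 1"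
    note nm = numeric[OF assms(5,8,6,9,7) M NN b_def m_def s_def N2]
    define L where "L = m * b"
    have LK: "real L \<le> (1 - 1/\<beta> - 1/\<beta>') * real K"
    proof -
      have "real L \<le> real M" unfolding L_def using nm(5) by (simp only: of_nat_le_iff)
      also have "real M = \<gamma> * (real M / \<gamma>)" using g0 by simp
      also have "\<dots> \<le> \<gamma> * real K"
      proof (rule mult_left_mono)
        show "real M / \<gamma> \<le> real K" unfolding KK Ki_def by (rule le_of_int_ceiling)
      qed (use g0 in simp)
      finally show ?thesis by (simp add: \<gamma>_def)
    qed
    obtain cd :: "nat \<Rightarrow> 'x" where
      cd1: "\<And>j. j < L \<Longrightarrow> measure_pmf.prob (W (cd j)) {y. pmf (W (cd j)) y / pmf (out_dist W p) y \<le> C}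
               \<le> \<beta> * t" and
      cd2: "\<And>j. j < L \<Longrightarrow> (\<Sum>j'\<in>{..<L}-{j}. measure_pmf.prob (W (cd j))
               {y. \<not> pmf (W (cd j')) y / pmf (out_dist W p) y \<le> C}) \<le> Lam"
      using coding[OF C assms(3,4) K1 LK, of W p] unfolding t_def Lam_def by blast
    obtain F where F: "F \<subseteq> PiE {..<m} (\<lambda>_. {..<b})" "card F = N"
      "\<forall>w\<in>F. \<forall>w'\<in>F. w \<noteq> w' \<longrightarrow> card {c\<in>{..<m}. w c = w' c} < s"
      using words_exist[OF nm(1) nm(3) nm(4)] by blast
    have finF: "finite F" using F(1) by (rule finite_subset) (simp add: finite_PiE)
    obtain e where e: "bij_betw e {1..N} F"
      using bij_betw_iff_card[of "{1..N}" F] finF F(2) by auto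
    have eF: "e i \<in> F" if "i \<in> {1..N}" for i using e that by (auto dest: bij_betw_apply)
    have eb: "e i c < b" if "i \<in> {1..N}" "c < m" for i c using eF[OF that(1)] F(1) that(2) by (auto simp: PiE_iff)
    define Ex where "Ex x = {y. \<not> pmf (W x) y / pmf (out_dist W p) y \<le> C}" for x
    define ix where "ix i c = c * b + e i c" for i c
    define Q :: "nat \<Rightarrow> 'x pmf" where "Q i = map_pmf (\<lambda>c. cd (ix i c)) (pmf_of_set {..<m})" for i
    define D :: "nat \<Rightarrow> 'y set" where "D i = (\<Union>c\<in>{..<m}. Ex (cd (ix i c)))" for i
    have m0: "{..<m} \<noteq> {}" using nm(2) by (simp add: lessThan_empty_iff)
    have ixL: "ix i c < L" if "i \<in> {1..N}" "c < m" for i c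
      unfolding ix_def L_def by (rule idx_lt) (use that eb in auto)
    have outQ: "measure_pmf.prob (out_dist W (Q i)) S
        = (\<Sum>c\<in>{..<m}. measure_pmf.prob (W (cd (ix i c))) S) / real m" for i S
    proof -
      have "out_dist W (Q i) = bind_pmf (pmf_of_set {..<m}) (\<lambda>c. W (cd (ix i c)))"
        by (simp add: out_dist_def Q_def bind_map_pmf)
      then show ?thesis using m0 by (simp add: prob_bind integral_pmf_of_set)
    qed
    have mu: "measure_pmf.prob (out_dist W (Q i)) (- D i) \<le> \<alpha> * \<beta> * t" if i: "i \<in> {1..N}" for i
    proof -
      have "(\<Sum>c\<in>{..<m}. measure_pmf.prob (W (cd (ix i c))) (- D i)) \<le> (\<Sum>c\<in>{..<m}. \<beta> * t)"
      proof (rule sum_mono)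
        fix c assume c: "c \<in> {..<m}"
        have "measure_pmf.prob (W (cd (ix i c))) (- D i) \<le> measure_pmf.prob (W (cd (ix i c))) (- Ex (cd (ix i c)))"
          by (rule measure_pmf.finite_measure_mono) (use c in \<open>auto simp: D_def\<close>)
        also have "- Ex (cd (ix i c)) = {y. pmf (W (cd (ix i c))) y / pmf (out_dist W p) y \<le> C}"
          by (auto simp: Ex_def)
        also have "measure_pmf.prob (W (cd (ix i c))) \<dots> \<le> \<beta> * t" using cd1 ixL i c by auto
        finally show "measure_pmf.prob (W (cd (ix i c))) (- D i) \<le> \<beta> * t" .
      qed
      then have "measure_pmf.prob (out_dist W (Q i)) (- D i) \<le> \<beta> * t"
        using nm(2) by (simp add: outQ divide_le_eq mult.commute)
      also have "\<beta> * t \<le> \<alpha> * \<beta> * t" using a1 assms t0 by (simp add: mult_le_cancel_right1)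
      finally show ?thesis .
    qed
    have lam: "measure_pmf.prob (out_dist W (Q j)) (D i) \<le> \<kappa> + Lam"
      if i: "i \<in> {1..N}" and j: "j \<in> {1..N}" and ij: "i \<noteq> j" for i j
    proof -
      define Ag where "Ag = {c\<in>{..<m}. e i c = e j c}"
      have eij: "e i \<noteq> e j"
      proof
        assume "e i = e j"
        then have "i = j" using inj_onD[OF bij_betw_imp_inj_on[OF e]] i j by blast
        with ij show False by simp
      qed
      have cAg: "real (card Ag) \<le> \<kappa> * real m"
      proof -
        have "card Ag < s" using F(3) eF[OF i] eF[OF j] eij unfolding Ag_def by blast
        then show ?thesis by (rule nm(6))
      qed
      have each: "measure_pmf.prob (W (cd (ix j c))) (D i) \<le> (if c \<in> Ag then 1 else 0) + Lam"
        if c: "c \<in> {..<m}" for c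
      proof (cases "c \<in> Ag")
        case True
        have "measure_pmf.prob (W (cd (ix j c))) (D i) \<le> 1" by simp
        moreover have "(if c \<in> Ag then 1 else 0) + Lam = 1 + Lam" using True by simp
        ultimately show ?thesis using Lam0 by linarith
      next
        case False
        then have neq: "e i c \<noteq> e j c" using c by (simp add: Ag_def)
        have cm: "c < m" using c by simp
        have inj: "inj_on (ix i) {..<m}"
        proof (rule inj_onI)
          fix x y assume xy: "x \<in> {..<m}" "y \<in> {..<m}" "ix i x = ix i y"
          have "x = y \<and> e i x = e i y"
            by (rule idx_inj[OF eb[OF i, of x] eb[OF i, of y]]) (use xy in \<open>auto simp: ix_def\<close>)
          then show "x = y" by simp
        qed
        have sub: "ix i ` {..<m} \<subseteq> {..<L} - {ix j c}"
        proof
          fix x assume "x \<in> ix i ` {..<m}"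
          then obtain c' where c': "c' < m" "x = ix i c'" by auto
          have "ix i c' \<noteq> ix j c"
          proof
            assume "ix i c' = ix j c"
            then have "c' = c \<and> e i c' = e j c"
              unfolding ix_def by (rule idx_inj[OF eb[OF i c'(1)] eb[OF j cm]])
            then show False using neq by metis
          qed
          then show "x \<in> {..<L} - {ix j c}" using ixL[OF i c'(1)] c' by auto
        qed
        have "measure_pmf.prob (W (cd (ix j c))) (D i)
            \<le> (\<Sum>c'\<in>{..<m}. measure_pmf.prob (W (cd (ix j c))) (Ex (cd (ix i c'))))"
          unfolding D_def by (rule measure_pmf.finite_measure_subadditive_finite) auto
        also have "\<dots> = (\<Sum>j'\<in>ix i ` {..<m}. measure_pmf.prob (W (cd (ix j c))) (Ex (cd j')))"
          by (subst sum.reindex[OF inj]) simp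
        also have "\<dots> \<le> (\<Sum>j'\<in>{..<L}-{ix j c}. measure_pmf.prob (W (cd (ix j c))) (Ex (cd j')))"
          by (rule sum_mono2) (use sub in auto)
        also have "\<dots> \<le> Lam" using cd2[OF ixL[OF j]] c by (simp add: Ex_def)
        finally show ?thesis using False by simp
      qed
      have "(\<Sum>c\<in>{..<m}. measure_pmf.prob (W (cd (ix j c))) (D i))
          \<le> (\<Sum>c\<in>{..<m}. (if c \<in> Ag then 1 else 0) + Lam)"
        by (rule sum_mono) (rule each)
      also have "\<dots> = real (card Ag) + real m * Lam"
      proof -
        have "(\<Sum>c\<in>{..<m}. (if c \<in> Ag then 1 else 0 :: real)) = real (card Ag)"
          using sum.inter_filter[of "{..<m}" "\<lambda>_. 1::real" "\<lambda>c. c \<in> Ag"]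
          by (simp add: Ag_def)
        then show ?thesis by (simp add: sum.distrib)
      qed
      also have "\<dots> \<le> (\<kappa> + Lam) * real m" using cAg by (simp add: algebra_simps)
      finally show ?thesis using nm(2) by (simp add: outQ divide_le_eq)
    qed
    have "id_mu W N Q D \<le> \<alpha> * \<beta> * t"
      unfolding id_mu_def
    proof (rule max0_le)
      show "finite {measure_pmf.prob (out_dist W (Q i)) (- D i) |i. i \<in> {1..N}}" by simp
      show "0 \<le> \<alpha> * \<beta> * t" using assms t0 by simp
    qed (use mu in auto)
    moreover have "id_lambda W N Q D \<le> \<kappa> + \<alpha>' * \<beta>' * (1 / C) * real_of_int Ki"
      unfolding id_lambda_def
    proof (rule max0_le)
      show "finite {measure_pmf.prob (out_dist W (Q j)) (D i) |i j. i \<in> {1..N} \<and> j \<in> {1..N} \<and> i \<noteq> j}"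
        by (rule finite_subset[of _ "(\<lambda>(i, j). measure_pmf.prob (out_dist W (Q j)) (D i)) ` ({1..N} \<times> {1..N})"])
           auto
    next
      fix x assume "x \<in> {measure_pmf.prob (out_dist W (Q j)) (D i) |i j. i \<in> {1..N} \<and> j \<in> {1..N} \<and> i \<noteq> j}"
      then obtain i j where ij: "i \<in> {1..N}" "j \<in> {1..N}" "i \<noteq> j"
        and x: "x = measure_pmf.prob (out_dist W (Q j)) (D i)" by blast
      show "x \<le> \<kappa> + \<alpha>' * \<beta>' * (1 / C) * real_of_int Ki"
        using lam[OF ij] LamB x by linarith
    next
      show "0 \<le> \<kappa> + \<alpha>' * \<beta>' * (1 / C) * real_of_int Ki" by (rule goalB)
    qed
    ultimately show ?thesis using NN by (auto simp: t_def Ki_def \<gamma>_def)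
  qed
qed

end
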